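(* Let $1<g\in\mathbb{N}$ and let $\mathbf{X}=\bigcup_{i\ge1}X_i$ be a $g$-discrete self-similar fractal. For every $i\in\mathbb{Z}^+$, if $P_{\mathbf{X}}(i)$ holds then $P_{\mathbf{X}}(i+1)$ holds, where $P_{\mathbf{X}}(s)$ is the property: "the full grid graph of $X_s$ is a tree and $nhb_{X_s}=nvb_{X_s}=1$".
   Context: For $g\in\mathbb{N}$ write $\mathbb{N}_g=\{0,\dots,g-1\}$; for $A,B\subseteq\mathbb{N}^2$ and $k\in\mathbb{N}$, $A+kB=\{\vec m+k\vec n : \vec m\in A,\vec n\in B\}$. Let $1<g\in\mathbb{N}$. A set $\mathbf{X}\subset\mathbb{N}^2$ is a $g$-discrete self-similar fractal if there is a set $G$ with $\{(0,0)\}\subsetneq G\subsetneq\mathbb{N}_g^2$ having at least one point in every row and every column of $\mathbb{N}_g^2$ such that $\mathbf{X}=\bigcup_{i\ge1}X_i$, where $X_1=G$ and $X_{i+1}=X_i+g^iG$ ($X_i$ is the $i$-th stage). The full grid graph of $V\subseteq\mathbb{Z}^2$ has vertex set $V$ and an edge between $\vec x,\vec y$ iff $\|\vec x-\vec y\|=1$; a tree means this graph is connected and acyclic. For a finite $S\subseteq\mathbb{Z}^2$ let $l_S=\min_{(x,y)\in S}x$, $r_S=\max_{(x,y)\in S}x$, $b_S=\min_{(x,y)\in S}y$, $t_S=\max_{(x,y)\in S}y$. An h-bridge of $S$ is a subset of $S$ of the form $\{(l_S,y),(r_S,y)\}$; a v-bridge is a subset of $S$ of the form $\{(x,b_S),(x,t_S)\}$;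 $nhb_S$, $nvb_S$ denote their numbers. *)

theory Defs
  imports Main
begin

type_synonym pt = "int \<times> int"

definition Ng :: "nat \<Rightarrow> int set" where
  "Ng g = {0..<int g}"

definition msum :: "pt set \<Rightarrow> int \<Rightarrow> pt set \<Rightarrow> pt set" where
  "msum A k B = {(fst m + k * fst n, snd m + k * snd n) | m n. m \<in> A \<and> n \<in> B}"

definition fractal_generator :: "nat \<Rightarrow> pt set \<Rightarrow> bool" where
  "fractal_generator g G \<longleftrightarrow>
     {(0,0)} \<subset> G \<and> G \<subset> Ng g \<times> Ng g \<and>
     (\<forall>y\<in>Ng g. \<exists>x. (x, y) \<in> G) \<and>
     (\<forall>x\<in>Ng g. \<exists>y. (x, y) \<in> G)"

(* stage G g i = X_i; convention X_0 = {(0,0)} so that X_1 = X_0 + g^0 G = G *)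
primrec stage :: "pt set \<Rightarrow> nat \<Rightarrow> nat \<Rightarrow> pt set" where
  "stage G g 0 = {(0,0)}"
| "stage G g (Suc i) = msum (stage G g i) (int g ^ i) G"

definition grid_adj :: "pt \<Rightarrow> pt \<Rightarrow> bool" where
  "grid_adj p q \<longleftrightarrow> (fst p - fst q)^2 + (snd p - snd q)^2 = 1"

definition grid_edges :: "pt set \<Rightarrow> (pt \<times> pt) set" where
  "grid_edges V = {(p, q). p \<in> V \<and> q \<in> V \<and> grid_adj p q}"

definition grid_connected :: "pt set \<Rightarrow> bool" where
  "grid_connected V \<longleftrightarrow> (\<forall>u\<in>V. \<forall>v\<in>V. (u, v) \<in> (grid_edges V)\<^sup>*)"

definition grid_cycle :: "pt set \<Rightarrow> pt list \<Rightarrow> bool" where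
  "grid_cycle V cs \<longleftrightarrow> length cs \<ge> 3 \<and> distinct cs \<and> set cs \<subseteq> V \<and>
     (\<forall>i. Suc i < length cs \<longrightarrow> grid_adj (cs ! i) (cs ! Suc i)) \<and>
     grid_adj (last cs) (hd cs)"

definition grid_acyclic :: "pt set \<Rightarrow> bool" where
  "grid_acyclic V \<longleftrightarrow> \<not> (\<exists>cs. grid_cycle V cs)"

definition grid_tree :: "pt set \<Rightarrow> bool" where
  "grid_tree V \<longleftrightarrow> grid_connected V \<and> grid_acyclic V"

definition lS :: "pt set \<Rightarrow> int" where "lS S = Min (fst ` S)"
definition rS :: "pt set \<Rightarrow> int" where "rS S = Max (fst ` S)"
definition bS :: "pt set \<Rightarrow> int" where "bS S = Min (snd ` S)"
definition tS :: "pt set \<Rightarrow> int" where "tS S = Max (snd ` S)"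

definition hbridges :: "pt set \<Rightarrow> pt set set" where
  "hbridges S = {B. B \<subseteq> S \<and> (\<exists>y. B = {(lS S, y), (rS S, y)})}"
definition vbridges :: "pt set \<Rightarrow> pt set set" where
  "vbridges S = {B. B \<subseteq> S \<and> (\<exists>x. B = {(x, bS S), (x, tS S)})}"

definition nhb :: "pt set \<Rightarrow> nat" where "nhb S = card (hbridges S)"
definition nvb :: "pt set \<Rightarrow> nat" where "nvb S = card (vbridges S)"

definition P_prop :: "pt set \<Rightarrow> bool" where
  "P_prop S \<longleftrightarrow> grid_tree S \<and> nhb S = 1 \<and> nvb S = 1"

end

theory Submission
  imports Defs "HOL-Library.Transitive_Closure_Table"
begin

lemma sq1_int: "(a::int)^2 + b^2 = 1 \<longleftrightarrow> (a = 1 \<and> b = 0) \<or> (a = -1 \<and> b = 0) \<or> (a = 0 \<and> b = 1) \<or> (a = 0 \<and> b = -1)"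
proof
  assume h: "a^2 + b^2 = 1"
  have a: "\<bar>a\<bar> \<le> 1"
  proof (rule ccontr)
    assume "\<not> \<bar>a\<bar> \<le> 1"
    then have "\<bar>a\<bar> \<ge> 2" by simp
    then have "\<bar>a\<bar> * \<bar>a\<bar> \<ge> 2 * 2" by (meson mult_mono order_trans zero_le_numeral)
    then have "a^2 \<ge> 4" by (simp add: power2_eq_square abs_mult[symmetric])
    moreover have "b^2 \<ge> 0" by simp
    ultimately show False using h by linarith
  qed
  have b: "\<bar>b\<bar> \<le> 1"
  proof (rule ccontr)
    assume "\<not> \<bar>b\<bar> \<le> 1"
    then have "\<bar>b\<bar> \<ge> 2" by simp
    then have "\<bar>b\<bar> * \<bar>b\<bar> \<ge> 2 * 2" by (meson mult_mono order_trans zero_le_numeral)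
    then have "b^2 \<ge> 4" by (simp add: power2_eq_square abs_mult[symmetric])
    moreover have "a^2 \<ge> 0" by simp
    ultimately show False using h by linarith
  qed
  have "a \<in> {-1,0,1}" "b \<in> {-1,0,1}" using a b by auto
  then show "(a = 1 \<and> b = 0) \<or> (a = -1 \<and> b = 0) \<or> (a = 0 \<and> b = 1) \<or> (a = 0 \<and> b = -1)"
    using h by auto
qed auto

lemma grid_adj_iff: "grid_adj p q \<longleftrightarrow>
   (fst q = fst p + 1 \<and> snd q = snd p) \<or> (fst q = fst p - 1 \<and> snd q = snd p) \<or>
   (fst q = fst p \<and> snd q = snd p + 1) \<or> (fst q = fst p \<and> snd q = snd p - 1)"
  unfolding grid_adj_def sq1_int by auto

lemma grid_adj_sym: "grid_adj p q \<Longrightarrow> grid_adj q p"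
  unfolding grid_adj_iff by auto

lemma grid_adj_irrefl: "grid_adj p q \<Longrightarrow> p \<noteq> q"
  unfolding grid_adj_iff by auto

lemma divmod_uniq: "(0::int) \<le> r \<Longrightarrow> r < k \<Longrightarrow> x = r + k * d \<Longrightarrow> x div k = d \<and> x mod k = r"
  by simp

definition blk :: "int \<Rightarrow> pt \<Rightarrow> pt" where "blk k p = (fst p div k, snd p div k)"
definition rem :: "int \<Rightarrow> pt \<Rightarrow> pt" where "rem k p = (fst p mod k, snd p mod k)"
definition lift :: "int \<Rightarrow> pt \<Rightarrow> pt \<Rightarrow> pt" where "lift k c b = (fst b + k * fst c, snd b + k * snd c)"
definition box :: "int \<Rightarrow> pt set" where "box k = {0..<k} \<times> {0..<k}"

lemma lift_blk_rem: "lift k (blk k p) (rem k p) = p"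
  unfolding lift_def blk_def rem_def by (simp add: mult.commute)

lemma blk_lift: "b \<in> box k \<Longrightarrow> blk k (lift k c b) = c"
  unfolding lift_def blk_def box_def by auto

lemma rem_lift: "b \<in> box k \<Longrightarrow> rem k (lift k c b) = b"
  unfolding lift_def rem_def box_def by auto

lemma rem_box: "0 < k \<Longrightarrow> rem k p \<in> box k"
  unfolding rem_def box_def by auto

lemma mem_msum: assumes "0 < k" "B \<subseteq> box k"
  shows "p \<in> msum B k C \<longleftrightarrow> rem k p \<in> B \<and> blk k p \<in> C"
proof
  assume "p \<in> msum B k C"
  then obtain m n where mn: "m \<in> B" "n \<in> C" "p = lift k n m"
    unfolding msum_def lift_def by auto
  then have "m \<in> box k" using assms by auto
  then show "rem k p \<in> B \<and> blk k p \<in> C" using mn by (simp add: blk_lift rem_lift)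
next
  assume "rem k p \<in> B \<and> blk k p \<in> C"
  then show "p \<in> msum B k C" unfolding msum_def
    using lift_blk_rem[of k p] unfolding lift_def by (metis (mono_tags, lifting) mem_Collect_eq)
qed

lemma succ_divmod: assumes "(0::int) < k"
  shows "((x+1) div k = x div k \<and> (x+1) mod k = x mod k + 1) \<or>
         ((x+1) div k = x div k + 1 \<and> x mod k = k - 1 \<and> (x+1) mod k = 0)"
proof -
  have m0: "0 \<le> x mod k" and m1: "x mod k < k" using assms by simp_all
  have xe: "x = x mod k + k * (x div k)" by simp
  show ?thesis
  proof (cases "x mod k + 1 < k")
    case True
    have "x + 1 = (x mod k + 1) + k * (x div k)" using xe by linarith
    from divmod_uniq[OF _ True this] m0 show ?thesis by simp
  next
    case False
    then have e: "x mod k = k - 1" using m1 by linarith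
    have "x + 1 = 0 + k * (x div k + 1)" using xe e by (simp add: algebra_simps)
    from divmod_uniq[OF _ assms this] e show ?thesis by simp
  qed
qed

lemma adj_cases: assumes "0 < k" "grid_adj p q"
  shows "(blk k p = blk k q) \<or>
   (blk k q = (fst (blk k p) + 1, snd (blk k p)) \<and> fst (rem k p) = k - 1 \<and> fst (rem k q) = 0 \<and> snd (rem k p) = snd (rem k q)) \<or>
   (blk k p = (fst (blk k q) + 1, snd (blk k q)) \<and> fst (rem k q) = k - 1 \<and> fst (rem k p) = 0 \<and> snd (rem k p) = snd (rem k q)) \<or>
   (blk k q = (fst (blk k p), snd (blk k p) + 1) \<and> snd (rem k p) = k - 1 \<and> snd (rem k q) = 0 \<and> fst (rem k p) = fst (rem k q)) \<or>
   (blk k p = (fst (blk k q), snd (blk k q) + 1) \<and> snd (rem k q) = k - 1 \<and> snd (rem k p) = 0 \<and> fst (rem k p) = fst (rem k q))"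
  using assms(2) unfolding grid_adj_iff
proof (elim disjE conjE)
  assume h: "fst q = fst p + 1" "snd q = snd p"
  from succ_divmod[OF assms(1), of "fst p"] show ?thesis
  proof (elim disjE conjE)
    assume "(fst p + 1) div k = fst p div k"
    then have "blk k p = blk k q" using h by (simp add: blk_def)
    then show ?thesis by blast
  next
    assume a: "(fst p + 1) div k = fst p div k + 1" "fst p mod k = k - 1" "(fst p + 1) mod k = 0"
    have "blk k q = (fst (blk k p) + 1, snd (blk k p)) \<and> fst (rem k p) = k - 1 \<and> fst (rem k q) = 0 \<and> snd (rem k p) = snd (rem k q)"
      using a h by (simp add: blk_def rem_def)
    then show ?thesis by blast
  qed
next
  assume h: "fst q = fst p - 1" "snd q = snd p"
  then have h': "fst p = fst q + 1" by simp
  from succ_divmod[OF assms(1), of "fst q"] show ?thesis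
  proof (elim disjE conjE)
    assume "(fst q + 1) div k = fst q div k"
    then have "blk k p = blk k q" using h(2) h' by (simp add: blk_def)
    then show ?thesis by blast
  next
    assume a: "(fst q + 1) div k = fst q div k + 1" "fst q mod k = k - 1" "(fst q + 1) mod k = 0"
    have "blk k p = (fst (blk k q) + 1, snd (blk k q)) \<and> fst (rem k q) = k - 1 \<and> fst (rem k p) = 0 \<and> snd (rem k p) = snd (rem k q)"
      using a h(2) h' by (simp add: blk_def rem_def)
    then show ?thesis by blast
  qed
next
  assume h: "fst q = fst p" "snd q = snd p + 1"
  from succ_divmod[OF assms(1), of "snd p"] show ?thesis
  proof (elim disjE conjE)
    assume "(snd p + 1) div k = snd p div k"
    then have "blk k p = blk k q" using h by (simp add: blk_def)
    then show ?thesis by blast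
  next
    assume a: "(snd p + 1) div k = snd p div k + 1" "snd p mod k = k - 1" "(snd p + 1) mod k = 0"
    have "blk k q = (fst (blk k p), snd (blk k p) + 1) \<and> snd (rem k p) = k - 1 \<and> snd (rem k q) = 0 \<and> fst (rem k p) = fst (rem k q)"
      using a h by (simp add: blk_def rem_def)
    then show ?thesis by blast
  qed
next
  assume h: "fst q = fst p" "snd q = snd p - 1"
  then have h': "snd p = snd q + 1" by simp
  from succ_divmod[OF assms(1), of "snd q"] show ?thesis
  proof (elim disjE conjE)
    assume "(snd q + 1) div k = snd q div k"
    then have "blk k p = blk k q" using h(1) h' by (simp add: blk_def)
    then show ?thesis by blast
  next
    assume a: "(snd q + 1) div k = snd q div k + 1" "snd q mod k = k - 1" "(snd q + 1) mod k = 0"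
    have "blk k p = (fst (blk k q), snd (blk k q) + 1) \<and> snd (rem k q) = k - 1 \<and> snd (rem k p) = 0 \<and> fst (rem k p) = fst (rem k q)"
      using a h(1) h' by (simp add: blk_def rem_def)
    then show ?thesis by blast
  qed
qed

lemma adj_same_blk: assumes "blk k p = blk k q"
  shows "grid_adj p q \<longleftrightarrow> grid_adj (rem k p) (rem k q)"
proof -
  have p: "fst p = fst (rem k p) + k * fst (blk k p)" "snd p = snd (rem k p) + k * snd (blk k p)"
   and q: "fst q = fst (rem k q) + k * fst (blk k q)" "snd q = snd (rem k q) + k * snd (blk k q)"
    using lift_blk_rem[of k p] lift_blk_rem[of k q] unfolding lift_def
    by (metis fst_conv snd_conv)+
  have "fst p - fst q = fst (rem k p) - fst (rem k q)" "snd p - snd q = snd (rem k p) - snd (rem k q)"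
    using p q assms by simp_all
  then show ?thesis unfolding grid_adj_def by simp
qed

lemma adj_lift_same: "grid_adj (lift k c b) (lift k c b') \<longleftrightarrow> grid_adj b b'"
  unfolding grid_adj_def lift_def by simp


lemma edges_sym: "(p,q) \<in> grid_edges V \<Longrightarrow> (q,p) \<in> grid_edges V"
  unfolding grid_edges_def using grid_adj_sym by auto

lemma rtrancl_edges_sym: "(p,q) \<in> (grid_edges V)\<^sup>* \<Longrightarrow> (q,p) \<in> (grid_edges V)\<^sup>*"
proof (induction rule: rtrancl_induct)
  case base then show ?case by simp
next
  case (step y z)
  then show ?case using edges_sym by (meson converse_rtrancl_into_rtrancl)
qed

lemma map_rtrancl:
  assumes "\<And>a b. (a,b) \<in> R \<Longrightarrow> (f a, f b) \<in> S\<^sup>*" and "(a,b) \<in> R\<^sup>*"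
  shows "(f a, f b) \<in> S\<^sup>*"
  using assms(2)
proof (induction rule: rtrancl_induct)
  case base then show ?case by simp
next
  case (step y z)
  then show ?case using assms(1) by (meson rtrancl_trans)
qed

lemma lift_in: assumes "0 < k" "B \<subseteq> box k" "b \<in> B" "c \<in> C"
  shows "lift k c b \<in> msum B k C"
proof -
  have "b \<in> box k" using assms by auto
  then show ?thesis using assms by (simp add: mem_msum blk_lift rem_lift)
qed

lemma msum_connected:
  assumes k: "0 < k" and Bb: "B \<subseteq> box k" and Bc: "grid_connected B"
    and hb: "\<exists>y. (0,y) \<in> B \<and> (k-1,y) \<in> B" and vb: "\<exists>x. (x,0) \<in> B \<and> (x,k-1) \<in> B"
    and Cc: "grid_connected C"
  shows "grid_connected (msum B k C)"
proof -
  define A where "A = msum B k C"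
  define E where "E = grid_edges A"
  have inA: "\<And>b c. b \<in> B \<Longrightarrow> c \<in> C \<Longrightarrow> lift k c b \<in> A"
    unfolding A_def using lift_in[OF k Bb] by blast
  have within: "(lift k c b, lift k c b') \<in> E\<^sup>*" if "b \<in> B" "b' \<in> B" "c \<in> C" for b b' c
  proof -
    have "(b,b') \<in> (grid_edges B)\<^sup>*" using Bc that unfolding grid_connected_def by blast
    moreover have "(lift k c a, lift k c a') \<in> E\<^sup>*" if "(a,a') \<in> grid_edges B" for a a'
    proof -
      have "a \<in> B" "a' \<in> B" "grid_adj a a'" using that unfolding grid_edges_def by auto
      then have "(lift k c a, lift k c a') \<in> E"
        unfolding E_def grid_edges_def using inA \<open>c \<in> C\<close> adj_lift_same by auto
      then show ?thesis by blast
    qed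
    ultimately show ?thesis using map_rtrancl[of "grid_edges B" "lift k c" E b b'] by blast
  qed
  have cross: "\<exists>b b'. b \<in> B \<and> b' \<in> B \<and> (lift k c b, lift k d b') \<in> E"
    if "c \<in> C" "d \<in> C" "grid_adj c d" for c d
  proof -
    obtain y where y: "(0,y) \<in> B" "(k-1,y) \<in> B" using hb by blast
    obtain x where x: "(x,0) \<in> B" "(x,k-1) \<in> B" using vb by blast
    from that(3) show ?thesis unfolding grid_adj_iff
    proof (elim disjE conjE)
      assume h: "fst d = fst c + 1" "snd d = snd c"
      have "grid_adj (lift k c (k-1,y)) (lift k d (0,y))"
        unfolding grid_adj_iff lift_def using h by (simp add: algebra_simps)
      then show ?thesis using y inA that unfolding E_def grid_edges_def by blast
    next
      assume h: "fst d = fst c - 1" "snd d = snd c"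
      then have h': "fst c = fst d + 1" by simp
      have "grid_adj (lift k c (0,y)) (lift k d (k-1,y))"
        unfolding grid_adj_iff lift_def using h' h(2) by (simp add: algebra_simps)
      then show ?thesis using y inA that unfolding E_def grid_edges_def by blast
    next
      assume h: "fst d = fst c" "snd d = snd c + 1"
      have "grid_adj (lift k c (x,k-1)) (lift k d (x,0))"
        unfolding grid_adj_iff lift_def using h by (simp add: algebra_simps)
      then show ?thesis using x inA that unfolding E_def grid_edges_def by blast
    next
      assume h: "fst d = fst c" "snd d = snd c - 1"
      then have h': "snd c = snd d + 1" by simp
      have "grid_adj (lift k c (x,0)) (lift k d (x,k-1))"
        unfolding grid_adj_iff lift_def using h' h(1) by (simp add: algebra_simps)
      then show ?thesis using x inA that unfolding E_def grid_edges_def by blast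
    qed
  qed
  have main: "\<forall>b\<in>B. \<forall>b'\<in>B. (lift k c b, lift k d b') \<in> E\<^sup>*"
    if "(c,d) \<in> (grid_edges C)\<^sup>*" "c \<in> C" for c d
    using that(1)
  proof (induction rule: rtrancl_induct)
    case base then show ?case using within that(2) by blast
  next
    case (step d e)
    have de: "d \<in> C" "e \<in> C" "grid_adj d e" using step(2) unfolding grid_edges_def by auto
    obtain b0 b1 where b: "b0 \<in> B" "b1 \<in> B" "(lift k d b0, lift k e b1) \<in> E" using cross[OF de] by blast
    show ?case
    proof (intro ballI)
      fix b b' assume "b \<in> B" "b' \<in> B"
      have "(lift k c b, lift k d b0) \<in> E\<^sup>*" using step(3) \<open>b \<in> B\<close> b by blast
      also have "(lift k d b0, lift k e b1) \<in> E\<^sup>*" using b by blast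
      also have "(lift k e b1, lift k e b') \<in> E\<^sup>*" using within b \<open>b' \<in> B\<close> de by blast
      finally show "(lift k c b, lift k e b') \<in> E\<^sup>*" .
    qed
  qed
  show ?thesis unfolding grid_connected_def
  proof (intro ballI)
    fix p q assume "p \<in> msum B k C" "q \<in> msum B k C"
    then have "rem k p \<in> B" "blk k p \<in> C" "rem k q \<in> B" "blk k q \<in> C"
      using mem_msum[OF k Bb] by auto
    moreover have "(blk k p, blk k q) \<in> (grid_edges C)\<^sup>*" using Cc calculation unfolding grid_connected_def by blast
    ultimately have "(lift k (blk k p) (rem k p), lift k (blk k q) (rem k q)) \<in> E\<^sup>*"
      using main by blast
    then show "(p, q) \<in> (grid_edges (msum B k C))\<^sup>*" unfolding E_def A_def lift_blk_rem .
  qed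
qed

lemma adj_blk: assumes "0 < k" "grid_adj p q"
  shows "blk k p = blk k q \<or> grid_adj (blk k p) (blk k q)"
  using adj_cases[OF assms] unfolding grid_adj_iff by auto

lemma msum_proj_connected:
  assumes k: "0 < k" and Bb: "B \<subseteq> box k" and Bne: "B \<noteq> {}"
    and Ac: "grid_connected (msum B k C)"
  shows "grid_connected C"
  unfolding grid_connected_def
proof (intro ballI)
  fix c d assume cd: "c \<in> C" "d \<in> C"
  obtain b where b: "b \<in> B" using Bne by blast
  have bb: "b \<in> box k" using b Bb by auto
  have "(lift k c b, lift k d b) \<in> (grid_edges (msum B k C))\<^sup>*"
    using Ac lift_in[OF k Bb b] cd unfolding grid_connected_def by blast
  moreover have "(blk k p, blk k q) \<in> (grid_edges C)\<^sup>*" if "(p,q) \<in> grid_edges (msum B k C)" for p q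
  proof -
    have "p \<in> msum B k C" "q \<in> msum B k C" "grid_adj p q" using that unfolding grid_edges_def by auto
    then have "blk k p \<in> C" "blk k q \<in> C" "blk k p = blk k q \<or> grid_adj (blk k p) (blk k q)"
      using mem_msum[OF k Bb] adj_blk[OF k] by auto
    then show ?thesis unfolding grid_edges_def by auto
  qed
  ultimately have "(blk k (lift k c b), blk k (lift k d b)) \<in> (grid_edges C)\<^sup>*"
    using map_rtrancl[of "grid_edges (msum B k C)" "blk k" "grid_edges C"] by blast
  then show "(c,d) \<in> (grid_edges C)\<^sup>*" using blk_lift[OF bb] by simp
qed


lemma acyclic_subset: "V \<subseteq> W \<Longrightarrow> grid_acyclic W \<Longrightarrow> grid_acyclic V"
  unfolding grid_acyclic_def grid_cycle_def by blast

lemma cut_lemma: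
  assumes Ca: "grid_acyclic C" and c: "c1 \<in> C" "c2 \<in> C" "grid_adj c1 c2"
  shows "(c1,c2) \<notin> (grid_edges C - {(c1,c2),(c2,c1)})\<^sup>*"
proof
  define F where "F = grid_edges C - {(c1,c2),(c2,c1)}"
  define R where "R = (\<lambda>a b. (a,b) \<in> F)"
  assume "(c1,c2) \<in> (grid_edges C - {(c1,c2),(c2,c1)})\<^sup>*"
  then have F: "(c1,c2) \<in> F\<^sup>*" unfolding F_def .
  have "R\<^sup>*\<^sup>* c1 c2" unfolding R_def rtranclp_rtrancl_eq using F by simp
  then obtain xs0 where "rtrancl_path R c1 xs0 c2" using rtranclp_eq_rtrancl_path by metis
  then obtain xs where p: "rtrancl_path R c1 xs c2" and d: "distinct (c1 # xs)"
    using rtrancl_path_distinct by metis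
  have ne: "xs \<noteq> []"
  proof
    assume "xs = []"
    then have "c1 = c2" using p by (auto elim: rtrancl_path.cases)
    then show False using c grid_adj_irrefl by blast
  qed
  have lastxs: "last xs = c2" using rtrancl_path_last[OF p ne] .
  have RF: "R a b \<Longrightarrow> a \<in> C \<and> b \<in> C \<and> grid_adj a b" for a b
    unfolding R_def F_def grid_edges_def by auto
  have len: "length xs \<ge> 2"
  proof (rule ccontr)
    assume "\<not> length xs \<ge> 2"
    obtain z ys where zs: "xs = z # ys" using ne by (meson list.exhaust)
    have "ys = []" using zs \<open>\<not> length xs \<ge> 2\<close> by (simp add: Suc_le_eq)
    then have "xs = [z]" using zs by simp
    then have "R c1 z" "z = c2" using p lastxs by (auto elim: rtrancl_path.cases)
    then show False unfolding R_def F_def by auto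
  qed
  define cs where "cs = c1 # xs"
  have "grid_cycle C cs" unfolding grid_cycle_def
  proof (intro conjI allI impI)
    show "3 \<le> length cs" using len cs_def by simp
    show "distinct cs" using d cs_def by simp
    show "set cs \<subseteq> C"
    proof
      fix z assume "z \<in> set cs"
      then have "z = c1 \<or> z \<in> set xs" using cs_def by auto
      then show "z \<in> C"
      proof
        assume "z \<in> set xs"
        then have "Rangep R z" using rtrancl_path_Range[OF p] by blast
        then show ?thesis using RF by blast
      qed (use c in simp)
    qed
    fix i assume "Suc i < length cs"
    then have "i < length xs" using cs_def by simp
    then have "R ((c1 # xs) ! i) (xs ! i)" using rtrancl_path_nth[OF p] by blast
    then show "grid_adj (cs ! i) (cs ! Suc i)" using RF cs_def by simp
  next
    show "grid_adj (last cs) (hd cs)" using cs_def ne lastxs c grid_adj_sym by simp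
  qed
  then show False using Ca unfolding grid_acyclic_def by blast
qed

lemma dir_px: assumes "0 < k" "grid_adj p q" "blk k q = (fst (blk k p) + 1, snd (blk k p))"
  shows "fst (rem k p) = k - 1 \<and> fst (rem k q) = 0 \<and> snd (rem k p) = snd (rem k q)"
  using adj_cases[OF assms(1,2)] assms(3) by (auto simp: prod_eq_iff)

lemma dir_mx: assumes "0 < k" "grid_adj p q" "blk k p = (fst (blk k q) + 1, snd (blk k q))"
  shows "fst (rem k q) = k - 1 \<and> fst (rem k p) = 0 \<and> snd (rem k p) = snd (rem k q)"
  using adj_cases[OF assms(1,2)] assms(3) by (auto simp: prod_eq_iff)

lemma dir_py: assumes "0 < k" "grid_adj p q" "blk k q = (fst (blk k p), snd (blk k p) + 1)"
  shows "snd (rem k p) = k - 1 \<and> snd (rem k q) = 0 \<and> fst (rem k p) = fst (rem k q)"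
  using adj_cases[OF assms(1,2)] assms(3) by (auto simp: prod_eq_iff)

lemma dir_my: assumes "0 < k" "grid_adj p q" "blk k p = (fst (blk k q), snd (blk k q) + 1)"
  shows "snd (rem k q) = k - 1 \<and> snd (rem k p) = 0 \<and> fst (rem k p) = fst (rem k q)"
  using adj_cases[OF assms(1,2)] assms(3) by (auto simp: prod_eq_iff)


lemma uniq_lift:
  assumes k: "0 < k" and Bb: "B \<subseteq> box k"
    and hu: "\<And>y y'. (0,y) \<in> B \<Longrightarrow> (k-1,y) \<in> B \<Longrightarrow> (0,y') \<in> B \<Longrightarrow> (k-1,y') \<in> B \<Longrightarrow> y = y'"
    and vu: "\<And>x x'. (x,0) \<in> B \<Longrightarrow> (x,k-1) \<in> B \<Longrightarrow> (x',0) \<in> B \<Longrightarrow> (x',k-1) \<in> B \<Longrightarrow> x = x'"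
    and mem: "p \<in> msum B k C" "q \<in> msum B k C" "p' \<in> msum B k C" "q' \<in> msum B k C"
    and adj: "grid_adj p q" "grid_adj p' q'"
    and bl: "blk k p = blk k p'" "blk k q = blk k q'" "blk k p \<noteq> blk k q"
  shows "p = p' \<and> q = q'"
proof -
  obtain a1 b1 where r1: "rem k p = (a1,b1)" by fastforce
  obtain a2 b2 where r2: "rem k q = (a2,b2)" by fastforce
  obtain a3 b3 where r3: "rem k p' = (a3,b3)" by fastforce
  obtain a4 b4 where r4: "rem k q' = (a4,b4)" by fastforce
  have inB: "(a1,b1) \<in> B" "(a2,b2) \<in> B" "(a3,b3) \<in> B" "(a4,b4) \<in> B"
    using mem mem_msum[OF k Bb] r1 r2 r3 r4 by auto
  have "(a1,b1) = (a3,b3) \<and> (a2,b2) = (a4,b4)"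
    using adj_cases[OF k adj(1)] bl(3)
  proof (elim disjE)
    assume "blk k p = blk k q" then show ?thesis using bl(3) by blast
  next
    assume h: "blk k q = (fst (blk k p) + 1, snd (blk k p)) \<and> fst (rem k p) = k - 1 \<and> fst (rem k q) = 0 \<and> snd (rem k p) = snd (rem k q)"
    then have h': "fst (rem k p') = k - 1 \<and> fst (rem k q') = 0 \<and> snd (rem k p') = snd (rem k q')"
      using dir_px[OF k adj(2)] bl by simp
    have e: "a1 = k - 1" "a2 = 0" "b1 = b2" "a3 = k - 1" "a4 = 0" "b3 = b4"
      using h h' r1 r2 r3 r4 by simp_all
    have "b1 = b3" using hu[of b1 b3] inB e by simp
    then show ?thesis using e by simp
  next
    assume h: "blk k p = (fst (blk k q) + 1, snd (blk k q)) \<and> fst (rem k q) = k - 1 \<and> fst (rem k p) = 0 \<and> snd (rem k p) = snd (rem k q)"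
    then have h': "fst (rem k q') = k - 1 \<and> fst (rem k p') = 0 \<and> snd (rem k p') = snd (rem k q')"
      using dir_mx[OF k adj(2)] bl by simp
    have e: "a2 = k - 1" "a1 = 0" "b1 = b2" "a4 = k - 1" "a3 = 0" "b3 = b4"
      using h h' r1 r2 r3 r4 by simp_all
    have "b1 = b3" using hu[of b1 b3] inB e by simp
    then show ?thesis using e by simp
  next
    assume h: "blk k q = (fst (blk k p), snd (blk k p) + 1) \<and> snd (rem k p) = k - 1 \<and> snd (rem k q) = 0 \<and> fst (rem k p) = fst (rem k q)"
    then have h': "snd (rem k p') = k - 1 \<and> snd (rem k q') = 0 \<and> fst (rem k p') = fst (rem k q')"
      using dir_py[OF k adj(2)] bl by simp
    have e: "b1 = k - 1" "b2 = 0" "a1 = a2" "b3 = k - 1" "b4 = 0" "a3 = a4"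
      using h h' r1 r2 r3 r4 by simp_all
    have "a1 = a3" using vu[of a1 a3] inB e by simp
    then show ?thesis using e by simp
  next
    assume h: "blk k p = (fst (blk k q), snd (blk k q) + 1) \<and> snd (rem k q) = k - 1 \<and> snd (rem k p) = 0 \<and> fst (rem k p) = fst (rem k q)"
    then have h': "snd (rem k q') = k - 1 \<and> snd (rem k p') = 0 \<and> fst (rem k p') = fst (rem k q')"
      using dir_my[OF k adj(2)] bl by simp
    have e: "b2 = k - 1" "b1 = 0" "a1 = a2" "b4 = k - 1" "b3 = 0" "a3 = a4"
      using h h' r1 r2 r3 r4 by simp_all
    have "a1 = a3" using vu[of a1 a3] inB e by simp
    then show ?thesis using e by simp
  qed
  then have "rem k p = rem k p'" "rem k q = rem k q'" using r1 r2 r3 r4 by simp_all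
  then have "lift k (blk k p) (rem k p) = lift k (blk k p') (rem k p')"
    "lift k (blk k q) (rem k q) = lift k (blk k q') (rem k q')" using bl by simp_all
  then show ?thesis unfolding lift_blk_rem by simp
qed

lemma ivt_nat: "\<not> P 0 \<Longrightarrow> P m \<Longrightarrow> \<exists>t<m. \<not> P t \<and> P (Suc t)"
proof (induction m)
  case 0 then show ?case by simp
next
  case (Suc m)
  then show ?case by (cases "P m") (auto intro: less_SucI)
qed

lemma mod2_ne: "3 \<le> (n::nat) \<Longrightarrow> j < n \<Longrightarrow> Suc (Suc j mod n) mod n \<noteq> j"
proof -
  assume a: "3 \<le> n" "j < n"
  have "Suc (Suc j mod n) mod n = Suc (Suc j) mod n" by (simp add: mod_Suc_eq)
  moreover have "Suc (Suc j) mod n \<noteq> j"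
  proof (cases "Suc (Suc j) < n")
    case True then show ?thesis by simp
  next
    case False
    then have "Suc (Suc j) mod n = (Suc (Suc j) - n) mod n" by (simp add: le_mod_geq)
    also have "\<dots> = Suc (Suc j) - n" using a by simp
    finally show ?thesis using a False by simp
  qed
  ultimately show ?thesis by simp
qed


lemma msum_acyclic:
  assumes k: "0 < k" and Bb: "B \<subseteq> box k" and Ba: "grid_acyclic B" and Ca: "grid_acyclic C"
    and hu: "\<And>y y'. (0,y) \<in> B \<Longrightarrow> (k-1,y) \<in> B \<Longrightarrow> (0,y') \<in> B \<Longrightarrow> (k-1,y') \<in> B \<Longrightarrow> y = y'"
    and vu: "\<And>x x'. (x,0) \<in> B \<Longrightarrow> (x,k-1) \<in> B \<Longrightarrow> (x',0) \<in> B \<Longrightarrow> (x',k-1) \<in> B \<Longrightarrow> x = x'"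
  shows "grid_acyclic (msum B k C)"
  unfolding grid_acyclic_def
proof
  define A where "A = msum B k C"
  assume "\<exists>cs. grid_cycle (msum B k C) cs"
  then obtain cs where cyc: "grid_cycle A cs" unfolding A_def by blast
  define n where "n = length cs"
  have n3: "3 \<le> n" and dist: "distinct cs" and setA: "set cs \<subseteq> A"
    and cons: "\<And>i. Suc i < n \<Longrightarrow> grid_adj (cs ! i) (cs ! Suc i)"
    and lh: "grid_adj (last cs) (hd cs)"
    using cyc unfolding grid_cycle_def n_def by auto
  have csne: "cs \<noteq> []" using n3 n_def by auto
  define nx where "nx i = Suc i mod n" for i
  have nxlt: "nx i < n" for i using n3 nx_def by simp
  have adjc: "grid_adj (cs ! i) (cs ! nx i)" if "i < n" for i
  proof (cases "Suc i < n")
    case True then show ?thesis using cons nx_def by simp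
  next
    case False
    then have si: "Suc i = n" using that by simp
    then have "i = n - 1" "nx i = 0" using nx_def by auto
    then show ?thesis using lh csne n_def by (simp add: last_conv_nth hd_conv_nth)
  qed
  have inA: "cs ! i \<in> A" if "i < n" for i using setA that n_def by auto
  have remB: "rem k p \<in> B" "blk k p \<in> C" if "p \<in> A" for p
    using that mem_msum[OF k Bb] A_def by auto
  show False
  proof (cases "\<forall>i<n. blk k (cs ! i) = blk k (cs ! nx i)")
    case True
    have allb: "i < n \<longrightarrow> blk k (cs ! i) = blk k (cs ! 0)" for i
    proof (induction i)
      case 0 then show ?case by simp
    next
      case (Suc i)
      show ?case
      proof
        assume "Suc i < n"
        then have "nx i = Suc i" using nx_def by simp
        have "blk k (cs ! i) = blk k (cs ! nx i)" using True[rule_format, of i] \<open>Suc i < n\<close> by simp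
        then show "blk k (cs ! Suc i) = blk k (cs ! 0)" using \<open>nx i = Suc i\<close> Suc.IH \<open>Suc i < n\<close> by simp
      qed
    qed
    have setb: "p \<in> set cs \<Longrightarrow> blk k p = blk k (cs ! 0)" for p
    proof -
      assume "p \<in> set cs"
      then obtain i where "i < n" "p = cs ! i" using n_def by (auto simp: in_set_conv_nth)
      then show ?thesis using allb[of i] by simp
    qed
    define cs' where "cs' = map (rem k) cs"
    have "grid_cycle B cs'" unfolding grid_cycle_def
    proof (intro conjI allI impI)
      show "3 \<le> length cs'" using n3 cs'_def n_def by simp
      have "inj_on (rem k) (set cs)"
      proof
        fix p q assume "p \<in> set cs" "q \<in> set cs" "rem k p = rem k q"
        then have "blk k p = blk k q" "rem k p = rem k q" using setb[of p] setb[of q] by simp_all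
        then have "lift k (blk k p) (rem k p) = lift k (blk k q) (rem k q)" by simp
        then show "p = q" unfolding lift_blk_rem .
      qed
      then show "distinct cs'" using dist cs'_def by (simp add: distinct_map)
      show "set cs' \<subseteq> B" using setA remB cs'_def by auto
      fix i assume "Suc i < length cs'"
      then have i: "Suc i < n" using cs'_def n_def by simp
      have "blk k (cs ! i) = blk k (cs ! Suc i)" using allb[of i] allb[of "Suc i"] i by simp
      then have "grid_adj (rem k (cs ! i)) (rem k (cs ! Suc i))"
        using cons[OF i] adj_same_blk by blast
      then show "grid_adj (cs' ! i) (cs' ! Suc i)"
        using i cs'_def n_def by simp
    next
      have "blk k (last cs) = blk k (hd cs)" using setb[of "last cs"] setb[of "hd cs"] csne by simp
      then have "grid_adj (rem k (last cs)) (rem k (hd cs))"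
        using lh adj_same_blk by blast
      then show "grid_adj (last cs') (hd cs')"
        using csne cs'_def by (simp add: last_map hd_map)
    qed
    then show False using Ba unfolding grid_acyclic_def by blast
  next
    case False
    then obtain j where j: "j < n" "blk k (cs ! j) \<noteq> blk k (cs ! nx j)" by blast
    define c1 where "c1 = blk k (cs ! j)"
    define c2 where "c2 = blk k (cs ! nx j)"
    have "grid_adj c1 c2" using adj_blk[OF k adjc[OF j(1)]] j(2) c1_def c2_def by simp
    then have c12: "c1 \<in> C" "c2 \<in> C" "grid_adj c1 c2" "c1 \<noteq> c2"
      using remB(2)[OF inA[OF j(1)]] remB(2)[OF inA[OF nxlt[of j]]] j(2) c1_def c2_def by auto
    define F where "F = grid_edges C - {(c1,c2),(c2,c1)}"
    define S where "S = {c. (c1,c) \<in> F\<^sup>*}"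
    have c2S: "c2 \<notin> S" using cut_lemma[OF Ca c12(1-3)] S_def F_def by simp
    have c1S: "c1 \<in> S" using S_def by simp
    have Scl: "b \<in> S" if "a \<in> S" "(a,b) \<in> F" for a b
      using that S_def rtrancl_into_rtrancl by fastforce
    define h where "h t = (blk k (cs ! ((Suc j + t) mod n)) \<in> S)" for t
    have h0: "\<not> h 0" using c2S h_def c2_def nx_def by simp
    have "(Suc j + (n - 1)) mod n = j" using j n3 by simp
    then have hn: "h (n - 1)" using c1S h_def c1_def by simp
    obtain t where t: "t < n - 1" "\<not> h t" "h (Suc t)" using ivt_nat[of h, OF h0 hn] by blast
    define a where "a = (Suc j + t) mod n"
    have an: "a < n" using a_def n3 by simp
    have ba: "(Suc j + Suc t) mod n = nx a" using a_def nx_def by (simp add: mod_Suc_eq)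
    define p where "p = cs ! a"
    define q where "q = cs ! nx a"
    have pS: "blk k p \<notin> S" using t(2) h_def p_def a_def by simp
    have qS: "blk k q \<in> S" using t(3) h_def q_def ba by simp
    have pq: "grid_adj p q" using adjc[OF an] p_def q_def by simp
    have pA: "p \<in> A" and qA: "q \<in> A" using inA an nxlt p_def q_def by auto
    have neq: "blk k p \<noteq> blk k q" using pS qS by auto
    have "grid_adj (blk k q) (blk k p)" using adj_blk[OF k pq] neq grid_adj_sym by auto
    then have E: "(blk k q, blk k p) \<in> grid_edges C" using remB pA qA unfolding grid_edges_def by auto
    have "(blk k q, blk k p) \<notin> F" using Scl qS pS by blast
    then have "(blk k q, blk k p) \<in> {(c1,c2),(c2,c1)}" using E F_def by blast
    then have bq: "blk k q = c1" and bp: "blk k p = c2" using pS c1S by auto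
    have "cs ! j = q \<and> cs ! nx j = p"
      using uniq_lift[OF k Bb hu vu, of "cs ! j" C "cs ! nx j" q p] inA[OF j(1)] inA[OF nxlt] pA qA
        adjc[OF j(1)] grid_adj_sym[OF pq] bq bp c1_def c2_def c12(4) A_def by auto
    then have e: "cs ! j = cs ! nx a" "cs ! nx j = cs ! a" using p_def q_def by simp_all
    have j1: "j = nx a" using e(1) nth_eq_iff_index_eq[OF dist, of j "nx a"] j(1) nxlt[of a] n_def by simp
    have j2: "nx j = a" using e(2) nth_eq_iff_index_eq[OF dist, of "nx j" a] nxlt[of j] an n_def by simp
    have "nx (nx j) = j" using j1 j2 by simp
    then have "Suc (Suc j mod n) mod n = j" unfolding nx_def .
    then show False using mod2_ne[OF n3 j(1)] by simp
  qed
qed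


definition full :: "int \<Rightarrow> pt set \<Rightarrow> bool" where
  "full k S \<longleftrightarrow> finite S \<and> S \<subseteq> box k \<and> (\<forall>x. 0 \<le> x \<and> x < k \<longrightarrow> (\<exists>y. (x,y) \<in> S))
     \<and> (\<forall>y. 0 \<le> y \<and> y < k \<longrightarrow> (\<exists>x. (x,y) \<in> S))"

lemma full_lr: assumes k: "0 < k" and f: "full k S"
  shows "lS S = 0" "rS S = k - 1" "bS S = 0" "tS S = k - 1"
proof -
  have fin: "finite S" and sb: "S \<subseteq> box k" using f unfolding full_def by auto
  obtain y0 where "(0,y0) \<in> S" using f k unfolding full_def by auto
  then have a: "0 \<in> fst ` S" by force
  have "\<exists>y. (k-1,y) \<in> S" using f k unfolding full_def by simp
  then obtain y1 where "(k-1,y1) \<in> S" by blast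
  then have b: "k - 1 \<in> fst ` S" by force
  obtain x0 where "(x0,0) \<in> S" using f k unfolding full_def by auto
  then have c: "0 \<in> snd ` S" by force
  have "\<exists>x. (x,k-1) \<in> S" using f k unfolding full_def by simp
  then obtain x1 where "(x1,k-1) \<in> S" by blast
  then have d: "k - 1 \<in> snd ` S" by force
  have bx: "\<And>p. p \<in> S \<Longrightarrow> 0 \<le> fst p \<and> fst p \<le> k - 1 \<and> 0 \<le> snd p \<and> snd p \<le> k - 1"
    using sb unfolding box_def by force
  show "lS S = 0" unfolding lS_def by (rule Min_eqI) (use fin a bx in auto)
  show "rS S = k - 1" unfolding rS_def by (rule Max_eqI) (use fin b bx in auto)
  show "bS S = 0" unfolding bS_def by (rule Min_eqI) (use fin c bx in auto)
  show "tS S = k - 1" unfolding tS_def by (rule Max_eqI) (use fin d bx in auto)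
qed

definition hrows :: "pt set \<Rightarrow> int set" where "hrows S = {y. (lS S, y) \<in> S \<and> (rS S, y) \<in> S}"
definition vrows :: "pt set \<Rightarrow> int set" where "vrows S = {x. (x, bS S) \<in> S \<and> (x, tS S) \<in> S}"

lemma nhb_eq: "nhb S = card (hrows S)"
proof -
  have "hbridges S = (\<lambda>y. {(lS S, y), (rS S, y)}) ` hrows S"
    unfolding hbridges_def hrows_def by auto
  moreover have "inj_on (\<lambda>y. {(lS S, y), (rS S, y)}) (hrows S)"
  proof (rule inj_onI)
    fix x y assume "{(lS S, x), (rS S, x)} = {(lS S, y), (rS S, y)}"
    then have "(lS S, x) \<in> {(lS S, y), (rS S, y)}" by blast
    then show "x = y" by auto
  qed
  ultimately show ?thesis unfolding nhb_def by (simp add: card_image)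
qed

lemma nvb_eq: "nvb S = card (vrows S)"
proof -
  have "vbridges S = (\<lambda>x. {(x, bS S), (x, tS S)}) ` vrows S"
    unfolding vbridges_def vrows_def by auto
  moreover have "inj_on (\<lambda>x. {(x, bS S), (x, tS S)}) (vrows S)"
  proof (rule inj_onI)
    fix x y assume "{(x, bS S), (x, tS S)} = {(y, bS S), (y, tS S)}"
    then have "(x, bS S) \<in> {(y, bS S), (y, tS S)}" by blast
    then show "x = y" by auto
  qed
  ultimately show ?thesis unfolding nvb_def by (simp add: card_image)
qed

lemma msum_finite: "finite B \<Longrightarrow> finite C \<Longrightarrow> finite (msum B k C)"
proof -
  assume "finite B" "finite C"
  moreover have "msum B k C \<subseteq> (\<lambda>(m,n). (fst m + k * fst n, snd m + k * snd n)) ` (B \<times> C)"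
    unfolding msum_def by force
  ultimately show ?thesis by (meson finite_SigmaI finite_imageI finite_subset)
qed

lemma full_msum: assumes k: "0 < k" and m: "0 < m" and fB: "full k B" and fC: "full m C"
  shows "full (k * m) (msum B k C)"
proof -
  have Bb: "B \<subseteq> box k" using fB full_def by auto
  have mem: "p \<in> msum B k C \<longleftrightarrow> rem k p \<in> B \<and> blk k p \<in> C" for p using mem_msum[OF k Bb] .
  have fin: "finite (msum B k C)" using fB fC msum_finite full_def by auto
  have bnd: "0 \<le> x \<and> x < k * m" if "0 \<le> x mod k" "x mod k < k" "0 \<le> x div k" "x div k < m" for x :: int
  proof -
    have e: "x = x mod k + k * (x div k)" by simp
    have "k * (x div k) \<le> k * (m - 1)" using that k by (intro mult_left_mono) auto
    moreover have "k * (m - 1) = k * m - k" by (simp add: algebra_simps)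
    moreover have "0 \<le> k * (x div k)" using that k by simp
    ultimately show ?thesis using that e by linarith
  qed
  have sub: "msum B k C \<subseteq> box (k * m)"
  proof
    fix p assume "p \<in> msum B k C"
    then have "rem k p \<in> box k" "blk k p \<in> box m" using mem fB fC unfolding full_def by auto
    then have "0 \<le> fst p mod k" "fst p mod k < k" "0 \<le> fst p div k" "fst p div k < m"
      "0 \<le> snd p mod k" "snd p mod k < k" "0 \<le> snd p div k" "snd p div k < m"
      unfolding box_def rem_def blk_def by auto
    then have "0 \<le> fst p \<and> fst p < k * m" "0 \<le> snd p \<and> snd p < k * m"
      using bnd[of "fst p"] bnd[of "snd p"] by blast+
    then show "p \<in> box (k * m)" unfolding box_def by (simp add: mem_Times_iff)
  qed
  have divb: "0 \<le> x div k \<and> x div k < m" if "0 \<le> x" "x < k * m" for x :: int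
  proof
    show "0 \<le> x div k" using that k by (simp add: pos_imp_zdiv_nonneg_iff)
    have e: "k * (x div k) \<le> x" using k
      by (metis add.commute add_le_cancel_left div_mult_mod_eq le_add_same_cancel1 mult.commute pos_mod_sign)
    show "x div k < m"
    proof (rule ccontr)
      assume "\<not> x div k < m"
      then have "k * m \<le> k * (x div k)" using k by (intro mult_left_mono) auto
      then show False using e that by linarith
    qed
  qed
  have cols: "\<exists>y. (x,y) \<in> msum B k C" if hx: "0 \<le> x" "x < k * m" for x
  proof -
    have km: "0 \<le> x mod k" "x mod k < k" using k by simp_all
    have "\<exists>y. (x mod k, y) \<in> B" using fB km unfolding full_def by blast
    then obtain y1 where y1: "(x mod k, y1) \<in> B" by blast
    obtain y2 where y2: "(x div k, y2) \<in> C" using fC divb[OF hx] unfolding full_def by auto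
    have "y1 \<in> {0..<k}" using y1 fB unfolding full_def box_def by auto
    then have "rem k (x, y1 + k * y2) = (x mod k, y1)" "blk k (x, y1 + k * y2) = (x div k, y2)"
      unfolding rem_def blk_def by auto
    then have "(x, y1 + k * y2) \<in> msum B k C" using mem[of "(x, y1 + k * y2)"] y1 y2 by simp
    then show ?thesis by blast
  qed
  have rows: "\<exists>x. (x,y) \<in> msum B k C" if hx: "0 \<le> y" "y < k * m" for y
  proof -
    have km: "0 \<le> y mod k" "y mod k < k" using k by simp_all
    have "\<exists>x. (x, y mod k) \<in> B" using fB km unfolding full_def by blast
    then obtain x1 where x1: "(x1, y mod k) \<in> B" by blast
    obtain x2 where x2: "(x2, y div k) \<in> C" using fC divb[OF hx] unfolding full_def by auto
    have "x1 \<in> {0..<k}" using x1 fB unfolding full_def box_def by auto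
    then have "rem k (x1 + k * x2, y) = (x1, y mod k)" "blk k (x1 + k * x2, y) = (x2, y div k)"
      unfolding rem_def blk_def by auto
    then have "(x1 + k * x2, y) \<in> msum B k C" using mem[of "(x1 + k * x2, y)"] x1 x2 by simp
    then show ?thesis by blast
  qed
  show ?thesis unfolding full_def using fin sub cols rows by blast
qed


lemma km1_divmod: assumes "(0::int) < k" "0 < m"
  shows "(k * m - 1) div k = m - 1" "(k * m - 1) mod k = k - 1"
proof -
  have "k * m - 1 = (k - 1) + k * (m - 1)" by (simp add: algebra_simps)
  then have "(k * m - 1) div k = m - 1 \<and> (k * m - 1) mod k = k - 1"
    using divmod_uniq[of "k - 1" k "k * m - 1" "m - 1"] assms by simp
  then show "(k * m - 1) div k = m - 1" "(k * m - 1) mod k = k - 1" by simp_all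
qed

lemma hrows_msum: assumes k: "0 < k" and m: "0 < m" and fB: "full k B" and fC: "full m C"
  shows "card (hrows (msum B k C)) = card (hrows B) * card (hrows C)"
proof -
  define A where "A = msum B k C"
  have Bb: "B \<subseteq> box k" using fB full_def by auto
  have fA: "full (k * m) A" using full_msum[OF k m fB fC] A_def by simp
  have km: "0 < k * m" using k m by simp
  have mem: "p \<in> A \<longleftrightarrow> rem k p \<in> B \<and> blk k p \<in> C" for p using mem_msum[OF k Bb] A_def by simp
  have hA: "hrows A = {y. (0,y) \<in> A \<and> (k * m - 1, y) \<in> A}"
    unfolding hrows_def using full_lr[OF km fA] by simp
  have hB: "hrows B = {y. (0,y) \<in> B \<and> (k - 1, y) \<in> B}"
    unfolding hrows_def using full_lr[OF k fB] by simp
  have hC: "hrows C = {y. (0,y) \<in> C \<and> (m - 1, y) \<in> C}"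
    unfolding hrows_def using full_lr[OF m fC] by simp
  have m0: "(0,y) \<in> A \<longleftrightarrow> (0, y mod k) \<in> B \<and> (0, y div k) \<in> C" for y
    using mem[of "(0,y)"] unfolding rem_def blk_def by simp
  have m1: "(k * m - 1,y) \<in> A \<longleftrightarrow> (k - 1, y mod k) \<in> B \<and> (m - 1, y div k) \<in> C" for y
    using mem[of "(k * m - 1,y)"] km1_divmod[OF k m] unfolding rem_def blk_def by simp
  define f where "f y = (y mod k, y div k)" for y :: int
  have "bij_betw f (hrows A) (hrows B \<times> hrows C)"
    unfolding bij_betw_def
  proof
    show "inj_on f (hrows A)"
    proof
      fix y y' assume "f y = f y'"
      then have "y mod k = y' mod k" "y div k = y' div k" unfolding f_def by simp_all
      then show "y = y'" by (metis div_mult_mod_eq)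
    qed
    show "f ` hrows A = hrows B \<times> hrows C"
    proof
      show "f ` hrows A \<subseteq> hrows B \<times> hrows C"
        unfolding hA hB hC f_def using m0 m1 by auto
      show "hrows B \<times> hrows C \<subseteq> f ` hrows A"
      proof
        fix z assume "z \<in> hrows B \<times> hrows C"
        then obtain a b where z: "z = (a,b)" "a \<in> hrows B" "b \<in> hrows C" by blast
        have "(0,a) \<in> B" using z hB by simp
        then have a: "0 \<le> a" "a < k" using Bb unfolding box_def by auto
        have dm: "(a + k * b) mod k = a" "(a + k * b) div k = b" using a by simp_all
        have "a + k * b \<in> hrows A" unfolding hA using m0 m1 dm z hB hC by simp
        moreover have "f (a + k * b) = z" using dm z f_def by simp
        ultimately show "z \<in> f ` hrows A" by blast
      qed
    qed
  qed
  then have "card (hrows A) = card (hrows B \<times> hrows C)" by (rule bij_betw_same_card)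
  then show ?thesis unfolding A_def by (simp add: card_cartesian_product)
qed

lemma vrows_msum: assumes k: "0 < k" and m: "0 < m" and fB: "full k B" and fC: "full m C"
  shows "card (vrows (msum B k C)) = card (vrows B) * card (vrows C)"
proof -
  define A where "A = msum B k C"
  have Bb: "B \<subseteq> box k" using fB full_def by auto
  have fA: "full (k * m) A" using full_msum[OF k m fB fC] A_def by simp
  have km: "0 < k * m" using k m by simp
  have mem: "p \<in> A \<longleftrightarrow> rem k p \<in> B \<and> blk k p \<in> C" for p using mem_msum[OF k Bb] A_def by simp
  have hA: "vrows A = {y. (y,0) \<in> A \<and> (y, k * m - 1) \<in> A}"
    unfolding vrows_def using full_lr[OF km fA] by simp
  have hB: "vrows B = {y. (y,0) \<in> B \<and> (y, k - 1) \<in> B}"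
    unfolding vrows_def using full_lr[OF k fB] by simp
  have hC: "vrows C = {y. (y,0) \<in> C \<and> (y, m - 1) \<in> C}"
    unfolding vrows_def using full_lr[OF m fC] by simp
  have m0: "(y,0) \<in> A \<longleftrightarrow> (y mod k, 0) \<in> B \<and> (y div k, 0) \<in> C" for y
    using mem[of "(y,0)"] unfolding rem_def blk_def by simp
  have m1: "(y, k * m - 1) \<in> A \<longleftrightarrow> (y mod k, k - 1) \<in> B \<and> (y div k, m - 1) \<in> C" for y
    using mem[of "(y, k * m - 1)"] km1_divmod[OF k m] unfolding rem_def blk_def by simp
  define f where "f y = (y mod k, y div k)" for y :: int
  have "bij_betw f (vrows A) (vrows B \<times> vrows C)"
    unfolding bij_betw_def
  proof
    show "inj_on f (vrows A)"
    proof
      fix y y' assume "f y = f y'"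
      then have "y mod k = y' mod k" "y div k = y' div k" unfolding f_def by simp_all
      then show "y = y'" by (metis div_mult_mod_eq)
    qed
    show "f ` vrows A = vrows B \<times> vrows C"
    proof
      show "f ` vrows A \<subseteq> vrows B \<times> vrows C"
        unfolding hA hB hC f_def using m0 m1 by auto
      show "vrows B \<times> vrows C \<subseteq> f ` vrows A"
      proof
        fix z assume "z \<in> vrows B \<times> vrows C"
        then obtain a b where z: "z = (a,b)" "a \<in> vrows B" "b \<in> vrows C" by blast
        have "(a,0) \<in> B" using z hB by simp
        then have a: "0 \<le> a" "a < k" using Bb unfolding box_def by auto
        have dm: "(a + k * b) mod k = a" "(a + k * b) div k = b" using a by simp_all
        have "a + k * b \<in> vrows A" unfolding hA using m0 m1 dm z hB hC by simp
        moreover have "f (a + k * b) = z" using dm z f_def by simp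
        ultimately show "z \<in> f ` vrows A" by blast
      qed
    qed
  qed
  then have "card (vrows A) = card (vrows B \<times> vrows C)" by (rule bij_betw_same_card)
  then show ?thesis unfolding A_def by (simp add: card_cartesian_product)
qed


lemma full_G: assumes fg: "fractal_generator g G"
  shows "full (int g) G"
proof -
  have sub: "G \<subseteq> Ng g \<times> Ng g" using fg unfolding fractal_generator_def by auto
  have "finite (Ng g \<times> Ng g)" unfolding Ng_def by simp
  then have fin: "finite G" using sub finite_subset by blast
  have bx: "box (int g) = Ng g \<times> Ng g" unfolding box_def Ng_def by simp
  show ?thesis unfolding full_def bx using fin sub fg unfolding fractal_generator_def Ng_def by auto
qed

lemma full_stage: assumes g: "1 < g" and fg: "fractal_generator g G"
  shows "full (int g ^ i) (stage G g i)"
proof (induction i)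
  case 0
  show ?case unfolding full_def box_def by auto
next
  case (Suc i)
  have k: "0 < int g ^ i" and m: "0 < int g" using g by simp_all
  have "full (int g ^ i * int g) (msum (stage G g i) (int g ^ i) G)"
    using full_msum[OF k m Suc full_G[OF fg]] .
  then show ?case by (simp add: power_Suc2 mult.commute)
qed

lemma stage_mono: assumes "(0,0) \<in> G" shows "stage G g i \<subseteq> stage G g (Suc i)"
proof
  fix p assume "p \<in> stage G g i"
  then have "(fst p + int g ^ i * fst (0::int,0::int), snd p + int g ^ i * snd (0::int,0::int)) \<in> msum (stage G g i) (int g ^ i) G"
    unfolding msum_def using assms by blast
  then show "p \<in> stage G g (Suc i)" by simp
qed

lemma stage1: "stage G g (Suc 0) = G"
  unfolding stage.simps msum_def by auto

lemma G_sub: assumes "(0,0) \<in> G" "1 \<le> i" shows "G \<subseteq> stage G g i"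
  using assms(2)
proof (induction i rule: dec_induct)
  case base then show ?case using stage1 by simp
next
  case (step n) then show ?case using stage_mono[OF assms(1), of g n] by blast
qed

lemma bridge_facts: assumes k: "0 < k" and f: "full k S" and h: "nhb S = 1" and v: "nvb S = 1"
  shows "\<exists>y. (0,y) \<in> S \<and> (k-1,y) \<in> S"
    "\<And>y y'. (0,y) \<in> S \<Longrightarrow> (k-1,y) \<in> S \<Longrightarrow> (0,y') \<in> S \<Longrightarrow> (k-1,y') \<in> S \<Longrightarrow> y = y'"
    "\<exists>x. (x,0) \<in> S \<and> (x,k-1) \<in> S"
    "\<And>x x'. (x,0) \<in> S \<Longrightarrow> (x,k-1) \<in> S \<Longrightarrow> (x',0) \<in> S \<Longrightarrow> (x',k-1) \<in> S \<Longrightarrow> x = x'"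
proof -
  have hr: "hrows S = {y. (0,y) \<in> S \<and> (k-1,y) \<in> S}" unfolding hrows_def using full_lr[OF k f] by simp
  have vr: "vrows S = {x. (x,0) \<in> S \<and> (x,k-1) \<in> S}" unfolding vrows_def using full_lr[OF k f] by simp
  obtain y0 where y0: "hrows S = {y0}" using h nhb_eq card_1_singletonE by metis
  obtain x0 where x0: "vrows S = {x0}" using v nvb_eq card_1_singletonE by metis
  show "\<exists>y. (0,y) \<in> S \<and> (k-1,y) \<in> S" using hr y0 by blast
  show "\<exists>x. (x,0) \<in> S \<and> (x,k-1) \<in> S" using vr x0 by blast
  show "y = y'" if "(0,y) \<in> S" "(k-1,y) \<in> S" "(0,y') \<in> S" "(k-1,y') \<in> S" for y y'
  proof -
    have "y \<in> hrows S" "y' \<in> hrows S" using hr that by auto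
    then show ?thesis using y0 by simp
  qed
  show "x = x'" if "(x,0) \<in> S" "(x,k-1) \<in> S" "(x',0) \<in> S" "(x',k-1) \<in> S" for x x'
  proof -
    have "x \<in> vrows S" "x' \<in> vrows S" using vr that by auto
    then show ?thesis using x0 by simp
  qed
qed

theorem mainTheorem7:
  fixes g :: nat and G :: "(int \<times> int) set" and i :: nat
  assumes "1 < g"
    and "fractal_generator g G"
    and "1 \<le> i"
    and "P_prop (stage G g i)"
  shows "P_prop (stage G g (Suc i))"
proof -
  note g = assms(1) and fg = assms(2)
  obtain j where ij: "i = Suc j" using assms(3) by (cases i) auto
  have G00: "(0,0) \<in> G" using fg unfolding fractal_generator_def by auto
  define k0 where "k0 = int g ^ j"
  define B0 where "B0 = stage G g j"
  define A0 where "A0 = stage G g i"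
  define k1 where "k1 = int g ^ i"
  have A0e: "A0 = msum B0 k0 G" using ij A0_def B0_def k0_def by simp
  have A1e: "stage G g (Suc i) = msum A0 k1 G" using A0_def k1_def by simp
  have gp: "0 < int g" using g by simp
  have k0p: "0 < k0" and k1p: "0 < k1" using g k0_def k1_def by simp_all
  have fG: "full (int g) G" using full_G[OF fg] .
  have fB0: "full k0 B0" using full_stage[OF g fg] k0_def B0_def by simp
  have fA0: "full k1 A0" using full_stage[OF g fg] k1_def A0_def by simp
  have B0b: "B0 \<subseteq> box k0" and A0b: "A0 \<subseteq> box k1" using fB0 fA0 full_def by auto
  have B0ne: "B0 \<noteq> {}"
  proof -
    have "\<exists>y. (0,y) \<in> B0" using fB0 k0p unfolding full_def by simp
    then show ?thesis by blast
  qed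
  have P: "grid_connected A0" "grid_acyclic A0" "nhb A0 = 1" "nvb A0 = 1"
    using assms(4) A0_def unfolding P_prop_def grid_tree_def by auto
  have "card (hrows A0) = card (hrows B0) * card (hrows G)"
    using hrows_msum[OF k0p gp fB0 fG] A0e by simp
  then have hG: "nhb G = 1" using P(3) nhb_eq by (metis nat_mult_eq_1_iff)
  have "card (vrows A0) = card (vrows B0) * card (vrows G)"
    using vrows_msum[OF k0p gp fB0 fG] A0e by simp
  then have vG: "nvb G = 1" using P(4) nvb_eq by (metis nat_mult_eq_1_iff)
  have cG: "grid_connected G" using msum_proj_connected[OF k0p B0b B0ne] P(1) A0e by simp
  have aG: "grid_acyclic G" using acyclic_subset[OF G_sub[OF G00 assms(3)]] P(2) A0_def by simp
  note bf = bridge_facts[OF k1p fA0 P(3) P(4)]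
  have c1: "grid_connected (msum A0 k1 G)"
    using msum_connected[OF k1p A0b P(1) bf(1) bf(3) cG] .
  have a1: "grid_acyclic (msum A0 k1 G)"
    using msum_acyclic[OF k1p A0b P(2) aG bf(2) bf(4)] by blast
  have h1: "nhb (msum A0 k1 G) = 1"
    using hrows_msum[OF k1p gp fA0 fG] P(3) hG nhb_eq by simp
  have v1: "nvb (msum A0 k1 G) = 1"
    using vrows_msum[OF k1p gp fA0 fG] P(4) vG nvb_eq by simp
  show ?thesis unfolding A1e P_prop_def grid_tree_def using c1 a1 h1 v1 by simp
qed

end
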